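(* Consider any memoryless quantum query algorithm with input alphabet $\Sigma=\{0,\dots,m-1\}$ accessing a uniformly random input $x\in\Sigma^n$, and let $|\phi^t\rangle=(I\otimes S)|\psi^t\rangle$ be its joint state with the record after $t$ queries. Define $$\Delta_t=\|\Pi|\phi^t\rangle\|,\qquad \Pi=I\otimes\sum_{x\in(\Sigma\cup\{\varnothing\})^n:\ \exists i\ne j,\ x_i=x_j\ne\varnothing}|x\rangle\langle x|.$$ Then $\Delta_{t+1}\le\Delta_t+\sqrt{10t/m}$ for every $t$ such that $t+1$ is at most the number of queries of the algorithm.
   Context: Let $m\ge2$, $\Sigma=\{0,\dots,m-1\}$, $\omega=e^{2\pi\mathbf i/m}$. The algorithm space has basis $|i,b\rangle$, $i\in\{1,\dots,n\}$, $b\in\Sigma$; a memoryless $T$-query algorithm is a sequence of unitaries $U_0,\dots,U_T$ on it, with fixed initial basis state $|\mathrm{init}\rangle$. The phase oracle is $O^\pm_x|i,b\rangle=\omega^{bx_i}|i,b\rangle$. The joint state after $t$ queries is $|\psi^t\rangle=\sum_{x\in\Sigma^n}m^{-n/2}|\psi_x^t\rangle\otimes|x\rangle$ with $|\psi_x^t\rangle=U_tO^\pm_x\cdots U_1O^\pm_xU_0|\mathrm{init}\rangle$. The record space is $(\mathbb C^{m+1})^{\otimes n}$, each factor with basis $|0\rangle,\dots,|m-1\rangle,|\varnothing\rangle$, containing the input register space. $S=S_1\otimes\cdots\otimes S_n$, where $S_i$ is the unitary Hermitian operator on the $i$-th factor with $S_i(\tfrac1{\sqrt m}\sum_{y}|y\rangle)=|\varnothing\rangle$,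 $S_i|\varnothing\rangle=\tfrac1{\sqrt m}\sum_y|y\rangle$, and $S_i$ fixing $\tfrac1{\sqrt m}\sum_y\omega^{by}|y\rangle$ for $b\in\{1,\dots,m-1\}$. *)

theory Defs
  imports Complex_Main "HOL-Library.FuncSet"
begin

text \<open>Algorithm space: basis |i,b> with i < n (0-based index) and b < m.
  Vectors are functions from basis labels to complex numbers, operators are
  matrices (functions of two basis labels).\<close>

type_synonym avec = "nat \<times> nat \<Rightarrow> complex"
type_synonym amat = "nat \<times> nat \<Rightarrow> nat \<times> nat \<Rightarrow> complex"

definition alg_basis :: "nat \<Rightarrow> nat \<Rightarrow> (nat \<times> nat) set" where
  "alg_basis n m = {..<n} \<times> {..<m}"

definition mat_vec :: "(nat \<times> nat) set \<Rightarrow> amat \<Rightarrow> avec \<Rightarrow> avec" where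
  "mat_vec B M v = (\<lambda>p. \<Sum>q\<in>B. M p q * v q)"

definition unitary_on :: "(nat \<times> nat) set \<Rightarrow> amat \<Rightarrow> bool" where
  "unitary_on B M \<longleftrightarrow>
     (\<forall>p\<in>B. \<forall>q\<in>B. (\<Sum>r\<in>B. cnj (M r p) * M r q) = (if p = q then 1 else 0))"

definition omega :: "nat \<Rightarrow> complex" where
  "omega m = cis (2 * pi / real m)"

definition basis_vec :: "nat \<times> nat \<Rightarrow> avec" where
  "basis_vec p0 = (\<lambda>p. if p = p0 then 1 else 0)"

definition phase_oracle :: "nat \<Rightarrow> (nat \<Rightarrow> nat) \<Rightarrow> avec \<Rightarrow> avec" where
  "phase_oracle m x v = (\<lambda>(i, b). omega m ^ (b * x i) * v (i, b))"

fun alg_state :: "nat \<Rightarrow> nat \<Rightarrow> (nat \<Rightarrow> amat) \<Rightarrow> nat \<times> nat \<Rightarrow> (nat \<Rightarrow> nat) \<Rightarrow> nat \<Rightarrow> avec" where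
  "alg_state n m U init x 0 = mat_vec (alg_basis n m) (U 0) (basis_vec init)"
| "alg_state n m U init x (Suc t) =
     mat_vec (alg_basis n m) (U (Suc t)) (phase_oracle m x (alg_state n m U init x t))"

text \<open>Record space: each factor has basis |0>,...,|m-1>,|empty>; |k> is Some k, |empty> is None.\<close>
definition records :: "nat \<Rightarrow> nat \<Rightarrow> (nat \<Rightarrow> nat option) set" where
  "records n m = PiE {..<n} (\<lambda>_. insert None (Some ` {..<m}))"

definition inputs :: "nat \<Rightarrow> nat \<Rightarrow> (nat \<Rightarrow> nat) set" where
  "inputs n m = PiE {..<n} (\<lambda>_. {..<m})"

definition embed_input :: "nat \<Rightarrow> (nat \<Rightarrow> nat) \<Rightarrow> (nat \<Rightarrow> nat option)" where
  "embed_input n x = restrict (\<lambda>i. Some (x i)) {..<n}"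

type_synonym jvec = "(nat \<times> nat) \<times> (nat \<Rightarrow> nat option) \<Rightarrow> complex"

definition joint_state :: "nat \<Rightarrow> nat \<Rightarrow> (nat \<Rightarrow> amat) \<Rightarrow> nat \<times> nat \<Rightarrow> nat \<Rightarrow> jvec" where
  "joint_state n m U init t = (\<lambda>(a, y).
     \<Sum>x\<in>inputs n m. if y = embed_input n x
        then complex_of_real (1 / sqrt (real m ^ n)) * alg_state n m U init x t a else 0)"

definition rec_u :: "nat \<Rightarrow> nat option \<Rightarrow> complex" where
  "rec_u m y = (case y of Some k \<Rightarrow> complex_of_real (1 / sqrt (real m)) | None \<Rightarrow> 0)"

definition rec_null :: "nat option \<Rightarrow> complex" where
  "rec_null y = (case y of None \<Rightarrow> 1 | Some k \<Rightarrow> 0)"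

definition rec_fourier :: "nat \<Rightarrow> nat \<Rightarrow> nat option \<Rightarrow> complex" where
  "rec_fourier m b y = (case y of Some k \<Rightarrow> omega m ^ (b * k) / complex_of_real (sqrt (real m)) | None \<Rightarrow> 0)"

text \<open>S_i = |u><empty| + |empty><u| + sum_{b=1}^{m-1} |f_b><f_b| : swaps u and empty,
  fixes the Fourier vectors f_b, b = 1..m-1 (matrix entry S_i[y,z]).\<close>
definition S_loc :: "nat \<Rightarrow> nat option \<Rightarrow> nat option \<Rightarrow> complex" where
  "S_loc m y z = rec_u m y * cnj (rec_null z) + rec_null y * cnj (rec_u m z)
     + (\<Sum>b\<in>{1..<m}. rec_fourier m b y * cnj (rec_fourier m b z))"

definition apply_S :: "nat \<Rightarrow> nat \<Rightarrow> jvec \<Rightarrow> jvec" where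
  "apply_S n m \<Psi> = (\<lambda>(a, y). \<Sum>z\<in>records n m. (\<Prod>i<n. S_loc m (y i) (z i)) * \<Psi> (a, z))"

definition phi_state :: "nat \<Rightarrow> nat \<Rightarrow> (nat \<Rightarrow> amat) \<Rightarrow> nat \<times> nat \<Rightarrow> nat \<Rightarrow> jvec" where
  "phi_state n m U init t = apply_S n m (joint_state n m U init t)"

definition collision :: "nat \<Rightarrow> (nat \<Rightarrow> nat option) \<Rightarrow> bool" where
  "collision n y \<longleftrightarrow> (\<exists>i<n. \<exists>j<n. i \<noteq> j \<and> y i = y j \<and> y i \<noteq> None)"

definition Delta :: "nat \<Rightarrow> nat \<Rightarrow> (nat \<Rightarrow> amat) \<Rightarrow> nat \<times> nat \<Rightarrow> nat \<Rightarrow> real" where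
  "Delta n m U init t = sqrt (\<Sum>(a, y)\<in>alg_basis n m \<times> records n m.
      if collision n y then (cmod (phi_state n m U init t (a, y)))\<^sup>2 else 0)"

end

theory Submission
  imports Defs "HOL-Analysis.L2_Norm"
begin

lemma om_pow: "omega m ^ k = cis (2 * pi * real k / real m)"
  unfolding omega_def DeMoivre by (simp add: field_simps)

lemma om_norm[simp]: "cmod (omega m ^ k) = 1"
  by (simp add: om_pow)

lemma om_cnj_mult[simp]: "cnj (omega m) ^ k * omega m ^ k = 1"
  by (simp add: om_pow cis_cnj cis_mult flip: complex_cnj_power)

lemma om_mult_cnj[simp]: "omega m ^ k * cnj (omega m) ^ k = 1"
  by (simp add: om_pow cis_cnj cis_mult flip: complex_cnj_power)

lemma om_m: "m > 0 \<Longrightarrow> omega m ^ m = 1"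
  unfolding om_pow by simp

lemma om_inj: "j < m \<Longrightarrow> k < m \<Longrightarrow> omega m ^ j = omega m ^ k \<Longrightarrow> j = k"
proof -
  assume a: "j < m" "k < m" "omega m ^ j = omega m ^ k"
  hence "m > 0" by simp
  have "inj_on (\<lambda>k. cis (2 * pi * real k / real m)) {..<m}"
    using bij_betw_roots_unity[OF \<open>m > 0\<close>] unfolding bij_betw_def by blast
  from inj_onD[OF this] a show ?thesis unfolding om_pow by simp
qed

lemma om_sum0: assumes "0 < b" "b < m" shows "(\<Sum>j<m. omega m ^ (b * j)) = 0"
proof -
  have ne: "omega m ^ b \<noteq> 1"
  proof
    assume "omega m ^ b = 1"
    hence "omega m ^ b = omega m ^ 0" by simp
    from om_inj[OF assms(2) _ this] assms show False by simp
  qed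
  have "(omega m ^ b) ^ m = (omega m ^ m) ^ b" by (simp only: power_mult[symmetric] mult.commute)
  hence "(omega m ^ b) ^ m = 1" using om_m[of m] assms by simp
  hence "(\<Sum>j<m. (omega m ^ b) ^ j) = 0" using ne by (simp add: sum_gp_strict)
  thus ?thesis by (simp add: power_mult)
qed

lemma sum_1_lt: "(m::nat) > 0 \<Longrightarrow> (\<Sum>b<m. f b) = f 0 + (\<Sum>b\<in>{1..<m}. f b)"
proof -
  assume "m > 0"
  have "(\<Sum>b<m. f b) = (\<Sum>b\<in>{0..<m}. f b)" by (simp add: lessThan_atLeast0)
  also have "\<dots> = f 0 + (\<Sum>b\<in>{Suc 0..<m}. f b)" using \<open>m > 0\<close> by (rule sum.atLeast_Suc_lessThan)
  finally show ?thesis by simp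
qed

lemma z_pow_m: assumes "m > 0" shows "(omega m ^ j * cnj (omega m ^ k)) ^ m = 1"
proof -
  have a: "(omega m ^ j) ^ m = 1" for j
  proof -
    have "(omega m ^ j) ^ m = (omega m ^ m) ^ j" by (simp only: power_mult[symmetric] mult.commute)
    thus ?thesis using om_m[OF assms] by simp
  qed
  show ?thesis by (simp only: power_mult_distrib complex_cnj_power[symmetric] a) simp
qed

lemma z_sum: assumes "j < m" "k < m"
  shows "(\<Sum>b\<in>{1..<m}. (omega m ^ j * cnj (omega m ^ k)) ^ b) = (if j = k then of_nat m - 1 else - 1)"
proof -
  define z where "z = omega m ^ j * cnj (omega m ^ k)"
  have m0: "m > 0" using assms by simp
  have s: "(\<Sum>b<m. z ^ b) = 1 + (\<Sum>b\<in>{1..<m}. z ^ b)" using sum_1_lt[OF m0, of "\<lambda>b. z ^ b"] by simp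
  show ?thesis
  proof (cases "j = k")
    case True
    have "z = 1" unfolding z_def True by simp
    thus ?thesis using s True unfolding z_def[symmetric] by simp
  next
    case False
    have "z \<noteq> 1"
    proof
      assume "z = 1"
      hence "omega m ^ j * cnj (omega m ^ k) * omega m ^ k = omega m ^ k" unfolding z_def by simp
      hence "omega m ^ j * (cnj (omega m) ^ k * omega m ^ k) = omega m ^ k" by (simp add: mult.assoc)
      hence "omega m ^ j = omega m ^ k" by simp
      thus False using om_inj assms False by blast
    qed
    moreover have "z ^ m = 1" unfolding z_def using z_pow_m[OF m0] .
    ultimately have "(\<Sum>b<m. z ^ b) = 0" by (simp add: sum_gp_strict)
    hence "(\<Sum>b\<in>{1..<m}. z ^ b) = -1" using s by (simp add: add_eq_0_iff)
    thus ?thesis using False unfolding z_def[symmetric] by simp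
  qed
qed

definition opts :: "nat \<Rightarrow> nat option set" where "opts m = insert None (Some ` {..<m})"

lemma finite_opts[simp]: "finite (opts m)" by (simp add: opts_def)

lemma sum_opts: "(\<Sum>e\<in>opts m. f e) = f None + (\<Sum>k<m. f (Some k))"
  unfolding opts_def by (simp add: sum.reindex)

lemma sqrt_sq_c: "m > 0 \<Longrightarrow> complex_of_real (sqrt (real m)) * complex_of_real (sqrt (real m)) = of_nat m"
proof -
  have "sqrt (real m) * sqrt (real m) = real m" by simp
  hence "complex_of_real (sqrt (real m) * sqrt (real m)) = of_nat m" by simp
  thus ?thesis by (simp only: of_real_mult)
qed

lemma four_term: assumes "m > 0"
  shows "omega m ^ (b*j) / complex_of_real (sqrt (real m)) * cnj (omega m ^ (b*k) / complex_of_real (sqrt (real m)))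
     = (omega m ^ j * cnj (omega m) ^ k) ^ b / of_nat m"
proof -
  have "omega m ^ (b*j) / complex_of_real (sqrt (real m)) * cnj (omega m ^ (b*k) / complex_of_real (sqrt (real m)))
     = omega m ^ (b*j) * cnj (omega m) ^ (b*k) / (complex_of_real (sqrt (real m)) * complex_of_real (sqrt (real m)))"
    by simp
  also have "\<dots> = omega m ^ (b*j) * cnj (omega m) ^ (b*k) / of_nat m" using sqrt_sq_c[OF assms] by simp
  also have "omega m ^ (b*j) * cnj (omega m) ^ (b*k) = (omega m ^ j * cnj (omega m) ^ k) ^ b"
    by (simp add: power_mult_distrib mult.commute[of b] power_mult)
  finally show ?thesis .
qed

lemma S_ss: assumes "j < m" "k < m"
  shows "S_loc m (Some j) (Some k) = (if j = k then 1 else 0) - 1 / of_nat m"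
proof -
  have m0: "m > 0" using assms by simp
  have "S_loc m (Some j) (Some k) = (\<Sum>b\<in>{1..<m}. (omega m ^ j * cnj (omega m) ^ k) ^ b / of_nat m)"
    unfolding S_loc_def rec_u_def rec_null_def rec_fourier_def
    using four_term[OF m0, of _ j k] by (simp del: complex_cnj_power complex_cnj_divide)
  also have "\<dots> = (\<Sum>b\<in>{1..<m}. (omega m ^ j * cnj (omega m) ^ k) ^ b) / of_nat m"
    by (simp add: sum_divide_distrib)
  also have "\<dots> = (if j = k then 1 else 0) - 1 / of_nat m"
    using z_sum[OF assms] m0 by (simp add: field_simps)
  finally show ?thesis .
qed

lemma S_sn: "m > 0 \<Longrightarrow> S_loc m (Some j) None = 1 / of_real (sqrt m)"
  unfolding S_loc_def rec_u_def rec_null_def rec_fourier_def by simp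

lemma S_ns: "m > 0 \<Longrightarrow> S_loc m None (Some j) = 1 / of_real (sqrt m)"
  unfolding S_loc_def rec_u_def rec_null_def rec_fourier_def by simp

lemma S_nn: "S_loc m None None = 0"
  unfolding S_loc_def rec_u_def rec_null_def rec_fourier_def by simp

definition wv :: "nat \<Rightarrow> nat option \<Rightarrow> complex" where
  "wv m e = (case e of None \<Rightarrow> -1 | Some k \<Rightarrow> 1 / complex_of_real (sqrt (real m)))"

definition ipo :: "nat \<Rightarrow> (nat option \<Rightarrow> complex) \<Rightarrow> (nat option \<Rightarrow> complex) \<Rightarrow> complex" where
  "ipo m x y = (\<Sum>e\<in>opts m. cnj (x e) * y e)"

definition refl :: "nat \<Rightarrow> (nat option \<Rightarrow> complex) \<Rightarrow> (nat option \<Rightarrow> complex)" where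
  "refl m x = (\<lambda>e. x e - ipo m (wv m) x * wv m e)"

definition Oop :: "nat \<Rightarrow> nat \<Rightarrow> (nat option \<Rightarrow> complex) \<Rightarrow> (nat option \<Rightarrow> complex)" where
  "Oop m b x = (\<lambda>e. case e of None \<Rightarrow> x e | Some k \<Rightarrow> omega m ^ (b * k) * x e)"

definition Vop :: "nat \<Rightarrow> nat \<Rightarrow> (nat option \<Rightarrow> complex) \<Rightarrow> (nat option \<Rightarrow> complex)" where
  "Vop m b x = refl m (Oop m b (refl m x))"

definition dl :: "nat option \<Rightarrow> nat option \<Rightarrow> complex" where
  "dl c = (\<lambda>e. if e = c then 1 else 0)"

definition Vm :: "nat \<Rightarrow> nat \<Rightarrow> nat option \<Rightarrow> nat option \<Rightarrow> complex" where
  "Vm m b e c = Vop m b (dl c) e"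

lemma cnj_wv[simp]: "cnj (wv m e) = wv m e"
  unfolding wv_def by (cases e) auto

lemma ipo_ww: assumes "m > 0" shows "ipo m (wv m) (wv m) = 2"
proof -
  have "ipo m (wv m) (wv m) = 1 + (\<Sum>k<m. 1 / (complex_of_real (sqrt (real m)) * complex_of_real (sqrt (real m))))"
    unfolding ipo_def sum_opts wv_def by simp
  also have "\<dots> = 1 + (\<Sum>k<m. 1 / of_nat m)" using sqrt_sq_c[OF assms] by simp
  also have "\<dots> = 2" using assms by simp
  finally show ?thesis .
qed

lemma ipo_diff: "ipo m a (\<lambda>e. x e - c * y e) = ipo m a x - c * ipo m a y"
  unfolding ipo_def by (simp add: algebra_simps sum_subtractf sum_distrib_left)

lemma refl_refl: assumes "m > 0" shows "refl m (refl m x) = x"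
proof -
  have "ipo m (wv m) (refl m x) = - ipo m (wv m) x"
    unfolding refl_def ipo_diff ipo_ww[OF assms] by simp
  thus ?thesis unfolding refl_def[of m "refl m x"] by (simp add: refl_def)
qed

lemma ipo_refl: assumes "m > 0" shows "ipo m (refl m x) (refl m y) = ipo m x y"
proof -
  define a where "a = ipo m (wv m) x"
  define b where "b = ipo m (wv m) y"
  have c1: "(\<Sum>e\<in>opts m. cnj (x e) * wv m e) = cnj a"
    unfolding a_def ipo_def by (simp add: mult.commute)
  have c2: "(\<Sum>e\<in>opts m. wv m e * y e) = b"
    unfolding b_def ipo_def by simp
  have c3: "(\<Sum>e\<in>opts m. wv m e * wv m e) = 2"
    using ipo_ww[OF assms] unfolding ipo_def by simp
  have "ipo m (refl m x) (refl m y) = ipo m (\<lambda>e. x e - a * wv m e) (\<lambda>e. y e - b * wv m e)"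
    unfolding refl_def a_def b_def ..
  also have "\<dots> = (\<Sum>e\<in>opts m. cnj (x e) * y e - b * (cnj (x e) * wv m e)
        - cnj a * (wv m e * y e) + cnj a * b * (wv m e * wv m e))"
    unfolding ipo_def
    by (rule sum.cong) (simp_all add: algebra_simps)
  also have "\<dots> = ipo m x y - b * cnj a - cnj a * b + cnj a * b * 2"
    unfolding ipo_def by (simp add: sum.distrib sum_subtractf sum_distrib_left[symmetric] c1 c2 c3)
  also have "\<dots> = ipo m x y" by simp
  finally show ?thesis .
qed

lemma ipo_O: "ipo m (Oop m b x) (Oop m b y) = ipo m x y"
  unfolding ipo_def Oop_def
proof (rule sum.cong)
  fix e show "cnj (case e of None \<Rightarrow> x e | Some k \<Rightarrow> omega m ^ (b * k) * x e) *
         (case e of None \<Rightarrow> y e | Some k \<Rightarrow> omega m ^ (b * k) * y e) = cnj (x e) * y e"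
  proof (cases e)
    case (Some k)
    have "cnj (omega m ^ (b * k) * x e) * (omega m ^ (b * k) * y e)
        = (cnj (omega m) ^ (b * k) * omega m ^ (b * k)) * (cnj (x e) * y e)"
      by (simp add: algebra_simps)
    thus ?thesis using Some by simp
  qed simp
qed simp

lemma refl_lin: "finite C \<Longrightarrow> refl m (\<lambda>e. \<Sum>c\<in>C. a c * f c e) = (\<lambda>e. \<Sum>c\<in>C. a c * refl m (f c) e)"
proof (rule ext)
  fix e assume C: "finite C"
  have "ipo m (wv m) (\<lambda>e. \<Sum>c\<in>C. a c * f c e) = (\<Sum>c\<in>C. a c * ipo m (wv m) (f c))"
    unfolding ipo_def sum_distrib_left
    by (subst sum.swap) (simp add: mult.assoc mult.left_commute)
  thus "refl m (\<lambda>e. \<Sum>c\<in>C. a c * f c e) e = (\<Sum>c\<in>C. a c * refl m (f c) e)"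
    unfolding refl_def by (simp add: sum_subtractf right_diff_distrib sum_distrib_right mult.assoc)
qed

lemma O_lin: "Oop m b (\<lambda>e. \<Sum>c\<in>C. a c * f c e) = (\<lambda>e. \<Sum>c\<in>C. a c * Oop m b (f c) e)"
  unfolding Oop_def
  by (rule ext, simp split: option.split add: sum_distrib_left mult.left_commute)

lemma refl_agree: "\<forall>e\<in>opts m. x e = x' e \<Longrightarrow> e \<in> opts m \<Longrightarrow> refl m x e = refl m x' e"
  unfolding refl_def ipo_def by simp

lemma O_agree: "\<forall>e\<in>opts m. x e = x' e \<Longrightarrow> \<forall>e\<in>opts m. Oop m b x e = Oop m b x' e"
proof
  fix e assume "\<forall>e\<in>opts m. x e = x' e" "e \<in> opts m"
  hence "x e = x' e" by blast
  thus "Oop m b x e = Oop m b x' e" unfolding Oop_def by (cases e) simp_all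
qed

lemma V_agree: assumes "\<forall>e\<in>opts m. x e = x' e" "e \<in> opts m" shows "Vop m b x e = Vop m b x' e"
proof -
  have "\<forall>e\<in>opts m. refl m x e = refl m x' e" using refl_agree[OF assms(1)] by blast
  hence "\<forall>e\<in>opts m. Oop m b (refl m x) e = Oop m b (refl m x') e" by (rule O_agree)
  thus ?thesis unfolding Vop_def by (rule refl_agree[OF _ assms(2)])
qed

lemma V_lin: "finite C \<Longrightarrow> Vop m b (\<lambda>e. \<Sum>c\<in>C. a c * f c e) = (\<lambda>e. \<Sum>c\<in>C. a c * Vop m b (f c) e)"
  unfolding Vop_def by (simp add: refl_lin O_lin)

lemma dl_expand: assumes "e \<in> opts m" shows "(\<Sum>c\<in>opts m. x c * dl c e) = x e"
proof -
  have "(\<Sum>c\<in>opts m. x c * dl c e) = (\<Sum>c\<in>opts m. if e = c then x c else 0)"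
    unfolding dl_def by (rule sum.cong) auto
  also have "\<dots> = x e" using assms by simp
  finally show ?thesis .
qed

lemma V_apply: assumes "e \<in> opts m" shows "(\<Sum>c\<in>opts m. Vm m b e c * x c) = Vop m b x e"
proof -
  have "\<forall>e\<in>opts m. x e = (\<Sum>c\<in>opts m. x c * dl c e)"
    using dl_expand by metis
  hence "Vop m b x e = Vop m b (\<lambda>e. \<Sum>c\<in>opts m. x c * dl c e) e"
    by (rule V_agree[OF _ assms])
  also have "\<dots> = (\<Sum>c\<in>opts m. x c * Vop m b (dl c) e)" by (simp add: V_lin)
  finally show ?thesis unfolding Vm_def by (simp add: mult.commute)
qed

lemma V_orth: assumes "m > 0" "c \<in> opts m" "c' \<in> opts m"
  shows "(\<Sum>e\<in>opts m. cnj (Vm m b e c) * Vm m b e c') = (if c = c' then 1 else 0)"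
proof -
  have "(\<Sum>e\<in>opts m. cnj (Vm m b e c) * Vm m b e c') = ipo m (Vop m b (dl c)) (Vop m b (dl c'))"
    unfolding ipo_def Vm_def ..
  also have "\<dots> = ipo m (dl c) (dl c')"
    unfolding Vop_def ipo_refl[OF assms(1)] ipo_O ..
  also have "\<dots> = (\<Sum>e\<in>opts m. cnj (dl c e) * dl c' e)" unfolding ipo_def ..
  also have "\<dots> = (\<Sum>e\<in>opts m. if e = c then dl c' e else 0)"
    unfolding dl_def by (rule sum.cong) auto
  also have "\<dots> = (if c = c' then 1 else 0)" using assms(2) by (simp add: dl_def)
  finally show ?thesis .
qed

lemma ipo_w_dl: assumes "c \<in> opts m" shows "ipo m (wv m) (dl c) = wv m c"
proof -
  have "ipo m (wv m) (dl c) = (\<Sum>e\<in>opts m. if e = c then wv m e else 0)"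
    unfolding ipo_def dl_def by (rule sum.cong) auto
  also have "\<dots> = wv m c" using assms by simp
  finally show ?thesis .
qed

lemma Some_opts[simp]: "Some k \<in> opts m \<longleftrightarrow> k < m" by (auto simp: opts_def)
lemma None_opts[simp]: "None \<in> opts m" by (auto simp: opts_def)

lemma Scol: assumes "k < m" "e \<in> opts m" shows "S_loc m e (Some k) = refl m (dl (Some k)) e"
proof -
  have m0: "m > 0" using assms by simp
  have ip: "ipo m (wv m) (dl (Some k)) = 1 / complex_of_real (sqrt (real m))"
    using ipo_w_dl[of "Some k" m] assms by (simp add: wv_def)
  show ?thesis
  proof (cases e)
    case None
    thus ?thesis using m0 ip by (simp add: S_ns refl_def dl_def wv_def)
  next
    case (Some j)
    hence j: "j < m" using assms by simp
    have "refl m (dl (Some k)) e = (if j = k then 1 else 0) - 1 / (complex_of_real (sqrt (real m)) * complex_of_real (sqrt (real m)))"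
      using Some ip by (simp add: refl_def dl_def wv_def)
    also have "\<dots> = S_loc m e (Some k)" using S_ss[OF j assms(1)] Some sqrt_sq_c[OF m0] by simp
    finally show ?thesis by simp
  qed
qed

lemma O_dl: "Oop m b (dl (Some k)) = (\<lambda>e. omega m ^ (b * k) * dl (Some k) e)"
proof
  fix e show "Oop m b (dl (Some k)) e = omega m ^ (b * k) * dl (Some k) e"
    unfolding Oop_def dl_def by (cases e) auto
qed

lemma refl_scal: "refl m (\<lambda>e. a * x e) = (\<lambda>e. a * refl m x e)"
proof -
  have "ipo m (wv m) (\<lambda>e. a * x e) = a * ipo m (wv m) x"
    unfolding ipo_def by (simp add: sum_distrib_left mult.left_commute)
  thus ?thesis unfolding refl_def by (simp add: algebra_simps)
qed

lemma V_S: assumes "k < m" "e \<in> opts m"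
  shows "(\<Sum>c\<in>opts m. Vm m b e c * S_loc m c (Some k)) = omega m ^ (b * k) * S_loc m e (Some k)"
proof -
  have m0: "m > 0" using assms by simp
  have "(\<Sum>c\<in>opts m. Vm m b e c * S_loc m c (Some k)) = Vop m b (\<lambda>c. S_loc m c (Some k)) e"
    by (rule V_apply[OF assms(2)])
  also have "\<dots> = Vop m b (refl m (dl (Some k))) e"
    by (rule V_agree[OF _ assms(2)]) (simp add: Scol[OF assms(1)])
  also have "\<dots> = refl m (Oop m b (dl (Some k))) e"
    unfolding Vop_def refl_refl[OF m0] ..
  also have "\<dots> = omega m ^ (b * k) * refl m (dl (Some k)) e"
    unfolding O_dl refl_scal ..
  also have "\<dots> = omega m ^ (b * k) * S_loc m e (Some k)"
    using Scol[OF assms] by simp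
  finally show ?thesis .
qed

lemma ipo_w_gen: "ipo m (wv m) x = - x None + (\<Sum>k<m. x (Some k)) / complex_of_real (sqrt (real m))"
  unfolding ipo_def sum_opts wv_def by (simp add: sum_divide_distrib)

lemma O_0: "Oop m 0 x = x"
  unfolding Oop_def by (rule ext) (simp split: option.split)

lemma Vm_0: "m > 0 \<Longrightarrow> Vm m 0 e c = dl c e"
  unfolding Vm_def Vop_def O_0 by (simp add: refl_refl)

lemma Vm_sn: assumes "0 < b" "b < m" "k < m"
  shows "Vm m b (Some k) None = omega m ^ (b * k) / complex_of_real (sqrt (real m))"
proof -
  define s where "s = complex_of_real (sqrt (real m))"
  have r: "refl m (dl None) = (\<lambda>e. dl None e + wv m e)"
    unfolding refl_def ipo_w_dl[OF None_opts] by (simp add: wv_def)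
  define y where "y = Oop m b (refl m (dl None))"
  have yN: "y None = 0" unfolding y_def r Oop_def by (simp add: dl_def wv_def)
  have yS: "y (Some j) = omega m ^ (b * j) / s" for j
    unfolding y_def r Oop_def by (simp add: dl_def wv_def s_def)
  have "ipo m (wv m) y = (\<Sum>j<m. omega m ^ (b * j)) / s / s"
    unfolding ipo_w_gen yN yS s_def[symmetric] by (simp add: sum_divide_distrib)
  hence ip: "ipo m (wv m) y = 0" using om_sum0[OF assms(1,2)] by simp
  have "Vm m b (Some k) None = refl m y (Some k)" unfolding Vm_def Vop_def y_def ..
  also have "\<dots> = omega m ^ (b * k) / s" unfolding refl_def ip yS by simp
  finally show ?thesis unfolding s_def .
qed

lemma Vm_ss: assumes "0 < b" "b < m" "k < m" "d < m"
  shows "Vm m b (Some k) (Some d) = omega m ^ (b * k) * (dl (Some d) (Some k) - 1 / of_nat m) - (omega m ^ (b * d) - 1) / of_nat m"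
proof -
  have m0: "m > 0" using assms by simp
  define s where "s = complex_of_real (sqrt (real m))"
  have ss: "s * s = of_nat m" unfolding s_def by (rule sqrt_sq_c[OF m0])
  have s0: "s \<noteq> 0" unfolding s_def using m0 by simp
  have r: "refl m (dl (Some d)) = (\<lambda>e. dl (Some d) e - wv m e / s)"
    unfolding refl_def ipo_w_dl[of "Some d", simplified, OF assms(4)] by (simp add: wv_def s_def)
  define y where "y = Oop m b (refl m (dl (Some d)))"
  have yN: "y None = 1 / s" unfolding y_def r Oop_def by (simp add: dl_def wv_def)
  have yS: "y (Some j) = omega m ^ (b * j) * (dl (Some d) (Some j) - 1 / (s * s))" for j
    unfolding y_def r Oop_def by (simp add: wv_def s_def)
  have sum1: "(\<Sum>j<m. omega m ^ (b * j) * (dl (Some d) (Some j) - 1 / (s * s))) = omega m ^ (b * d)"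
  proof -
    have "(\<Sum>j<m. omega m ^ (b * j) * (dl (Some d) (Some j) - 1 / (s * s)))
        = (\<Sum>j<m. if j = d then omega m ^ (b * j) else 0) - (\<Sum>j<m. omega m ^ (b * j)) / (s * s)"
    proof -
      have "(\<Sum>j<m. omega m ^ (b * j) * (dl (Some d) (Some j) - 1 / (s * s)))
          = (\<Sum>j<m. (if j = d then omega m ^ (b * j) else 0) - omega m ^ (b * j) / (s * s))"
        by (rule sum.cong) (auto simp: dl_def right_diff_distrib)
      thus ?thesis by (simp only: sum_subtractf sum_divide_distrib)
    qed
    also have "\<dots> = omega m ^ (b * d)" using om_sum0[OF assms(1,2)] assms(4) by simp
    finally show ?thesis .
  qed
  have ip: "ipo m (wv m) y = - 1 / s + omega m ^ (b * d) / s"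
    unfolding ipo_w_gen yN yS s_def[symmetric] sum1 by simp
  have "Vm m b (Some k) (Some d) = refl m y (Some k)" unfolding Vm_def Vop_def y_def ..
  also have "\<dots> = omega m ^ (b * k) * (dl (Some d) (Some k) - 1 / (s * s)) - (- 1 / s + omega m ^ (b * d) / s) * (1 / s)"
    unfolding refl_def ip yS by (simp add: wv_def s_def)
  also have "\<dots> = omega m ^ (b * k) * (dl (Some d) (Some k) - 1 / (s * s)) - (omega m ^ (b * d) - 1) / (s * s)"
    using s0 by (simp add: field_simps)
  finally show ?thesis unfolding ss .
qed

lemma Vm_ss_bound: assumes "0 < b" "b < m" "k < m" "d < m" "d \<noteq> k"
  shows "(cmod (Vm m b (Some k) (Some d)))\<^sup>2 \<le> 9 / (real m)\<^sup>2"
proof -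
  have m0: "m > 0" using assms by simp
  have veq: "Vm m b (Some k) (Some d) = - (omega m ^ (b * k) / of_nat m) - omega m ^ (b * d) / of_nat m + 1 / of_nat m"
    unfolding Vm_ss[OF assms(1-4)] using assms(5) by (simp add: dl_def diff_divide_distrib)
  { fix A B C :: complex
    have "cmod (- A - B + C) \<le> cmod (- A - B) + cmod C" by (rule norm_triangle_ineq)
    also have "cmod (- A - B) \<le> cmod (- A) + cmod B" by (rule norm_triangle_ineq4)
    finally have "cmod (- A - B + C) \<le> cmod A + cmod B + cmod C" by simp
  } note tri = this
  have "cmod (Vm m b (Some k) (Some d)) \<le> cmod (omega m ^ (b * k) / of_nat m) + cmod (omega m ^ (b * d) / of_nat m) + cmod (1 / of_nat m :: complex)"
    unfolding veq by (rule tri)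
  also have "\<dots> = 3 / real m" by (simp add: norm_divide)
  finally have "cmod (Vm m b (Some k) (Some d)) \<le> 3 / real m" .
  hence "(cmod (Vm m b (Some k) (Some d)))\<^sup>2 \<le> (3 / real m)\<^sup>2" by (rule power_mono) simp
  thus ?thesis by (simp add: power_divide)
qed

lemma Vm_sn_norm: assumes "0 < b" "b < m" "k < m"
  shows "(cmod (Vm m b (Some k) None))\<^sup>2 = 1 / real m"
  unfolding Vm_sn[OF assms] by (simp add: norm_divide power_divide)

lemma V_row: assumes "b < m" "k < m"
  shows "(\<Sum>c\<in>opts m - {Some k}. (cmod (Vm m b (Some k) c))\<^sup>2) \<le> 10 / real m"
proof (cases "b = 0")
  case True
  have m0: "m > 0" using assms by simp
  have "(\<Sum>c\<in>opts m - {Some k}. (cmod (Vm m b (Some k) c))\<^sup>2) = 0"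
    by (rule sum.neutral) (auto simp: True Vm_0[OF m0] dl_def)
  thus ?thesis by simp
next
  case False
  hence b0: "0 < b" by simp
  define g where "g (c::nat option) = (case c of None \<Rightarrow> 1 / real m | Some d \<Rightarrow> 9 / (real m)\<^sup>2)" for c
  have "(\<Sum>c\<in>opts m - {Some k}. (cmod (Vm m b (Some k) c))\<^sup>2) \<le> (\<Sum>c\<in>opts m - {Some k}. g c)"
  proof (rule sum_mono)
    fix c assume c: "c \<in> opts m - {Some k}"
    show "(cmod (Vm m b (Some k) c))\<^sup>2 \<le> g c"
    proof (cases c)
      case None thus ?thesis using Vm_sn_norm[OF b0 assms] by (simp add: g_def)
    next
      case (Some d)
      hence "d < m" "d \<noteq> k" using c by auto
      thus ?thesis using Vm_ss_bound[OF b0 assms(1,2)] Some by (simp add: g_def)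
    qed
  qed
  also have "\<dots> \<le> (\<Sum>c\<in>opts m. g c)"
    by (rule sum_mono2) (auto simp: g_def split: option.split)
  also have "\<dots> = 1 / real m + real m * (9 / (real m)\<^sup>2)"
    unfolding sum_opts by (simp add: g_def)
  also have "\<dots> = 10 / real m" using assms by (simp add: field_simps power2_eq_square)
  finally show ?thesis .
qed

definition Pprod :: "nat \<Rightarrow> nat \<Rightarrow> (nat \<Rightarrow> nat option) \<Rightarrow> (nat \<Rightarrow> nat) \<Rightarrow> complex" where
  "Pprod n m y x = (\<Prod>i<n. S_loc m (y i) (Some (x i)))"

definition cst :: "nat \<Rightarrow> nat \<Rightarrow> complex" where
  "cst n m = complex_of_real (1 / sqrt (real m ^ n))"

lemma embed_in_records: "x \<in> inputs n m \<Longrightarrow> embed_input n x \<in> records n m"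
  unfolding inputs_def records_def embed_input_def by (auto simp: PiE_iff)

lemma finite_records[simp]: "finite (records n m)"
  unfolding records_def by (simp add: finite_PiE)

lemma finite_inputs[simp]: "finite (inputs n m)"
  unfolding inputs_def by (simp add: finite_PiE)

lemma phi_form: "phi_state n m U init t (a, y) =
   cst n m * (\<Sum>x\<in>inputs n m. Pprod n m y x * alg_state n m U init x t a)"
proof -
  let ?P = "\<lambda>z. \<Prod>i<n. S_loc m (y i) (z i)"
  let ?F = "\<lambda>x. cst n m * alg_state n m U init x t a"
  have "phi_state n m U init t (a, y) = (\<Sum>z\<in>records n m. ?P z * (\<Sum>x\<in>inputs n m.
      (if z = embed_input n x then ?F x else 0)))"
    unfolding phi_state_def apply_S_def joint_state_def cst_def by simp
  also have "\<dots> = (\<Sum>z\<in>records n m. \<Sum>x\<in>inputs n m. (if z = embed_input n x then ?P z * ?F x else 0))"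
    by (rule sum.cong[OF refl], subst sum_distrib_left, rule sum.cong[OF refl], simp)
  also have "\<dots> = (\<Sum>x\<in>inputs n m. \<Sum>z\<in>records n m. (if z = embed_input n x then ?P z * ?F x else 0))"
    by (rule sum.swap)
  also have "\<dots> = (\<Sum>x\<in>inputs n m. ?P (embed_input n x) * ?F x)"
    by (rule sum.cong[OF refl]) (simp add: embed_in_records)
  also have "\<dots> = (\<Sum>x\<in>inputs n m. Pprod n m y x * ?F x)"
    unfolding Pprod_def embed_input_def by (rule sum.cong[OF refl]) simp
  finally show ?thesis by (simp add: sum_distrib_left mult.left_commute)
qed

definition Wop :: "nat \<Rightarrow> jvec \<Rightarrow> jvec" where
  "Wop m F = (\<lambda>(a, y). \<Sum>c\<in>opts m. Vm m (snd a) (y (fst a)) c * F (a, y(fst a := c)))"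

definition Uop :: "(nat \<times> nat) set \<Rightarrow> amat \<Rightarrow> jvec \<Rightarrow> jvec" where
  "Uop B M F = (\<lambda>(a', y). \<Sum>a\<in>B. M a' a * F (a, y))"

lemma rec_opts: "y \<in> records n m \<Longrightarrow> i < n \<Longrightarrow> y i \<in> opts m"
  unfolding records_def opts_def by (auto simp: PiE_iff)

lemma inp_lt: "x \<in> inputs n m \<Longrightarrow> i < n \<Longrightarrow> x i < m"
  unfolding inputs_def by (auto simp: PiE_iff)

lemma P_upd: assumes "i < n"
  shows "Pprod n m (y(i := c)) x = S_loc m c (Some (x i)) * (\<Prod>j\<in>{..<n} - {i}. S_loc m (y j) (Some (x j)))"
proof -
  have "Pprod n m (y(i := c)) x = S_loc m c (Some (x i)) * (\<Prod>j\<in>{..<n} - {i}. S_loc m ((y(i := c)) j) (Some (x j)))"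
    unfolding Pprod_def using assms by (subst prod.remove[of _ i]) auto
  also have "(\<Prod>j\<in>{..<n} - {i}. S_loc m ((y(i := c)) j) (Some (x j))) = (\<Prod>j\<in>{..<n} - {i}. S_loc m (y j) (Some (x j)))"
    by (rule prod.cong) auto
  finally show ?thesis .
qed

lemma P_split: assumes "i < n"
  shows "Pprod n m y x = S_loc m (y i) (Some (x i)) * (\<Prod>j\<in>{..<n} - {i}. S_loc m (y j) (Some (x j)))"
  using P_upd[OF assms, where c = "y i" and y = y and m = m and x = x] by simp

lemma W_phase: assumes "i < n" "y \<in> records n m" "x \<in> inputs n m"
  shows "(\<Sum>c\<in>opts m. Vm m b (y i) c * Pprod n m (y(i := c)) x) = omega m ^ (b * x i) * Pprod n m y x"
proof -
  let ?Q = "\<Prod>j\<in>{..<n} - {i}. S_loc m (y j) (Some (x j))"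
  have "(\<Sum>c\<in>opts m. Vm m b (y i) c * Pprod n m (y(i := c)) x) = (\<Sum>c\<in>opts m. Vm m b (y i) c * S_loc m c (Some (x i))) * ?Q"
    unfolding P_upd[OF assms(1)] sum_distrib_right by (simp add: mult.assoc)
  also have "\<dots> = omega m ^ (b * x i) * S_loc m (y i) (Some (x i)) * ?Q"
    using V_S[OF inp_lt[OF assms(3,1)] rec_opts[OF assms(2,1)]] by simp
  also have "\<dots> = omega m ^ (b * x i) * Pprod n m y x"
    unfolding P_split[OF assms(1), where y = y and x = x and m = m] by (simp add: mult.assoc)
  finally show ?thesis .
qed

lemma W_phi: assumes "i < n" "y \<in> records n m"
  shows "Wop m (phi_state n m U init t) ((i, b), y) =
    cst n m * (\<Sum>x\<in>inputs n m. Pprod n m y x * (omega m ^ (b * x i) * alg_state n m U init x t (i, b)))"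
proof -
  have "Wop m (phi_state n m U init t) ((i, b), y) = (\<Sum>c\<in>opts m. Vm m b (y i) c *
     (cst n m * (\<Sum>x\<in>inputs n m. Pprod n m (y(i := c)) x * alg_state n m U init x t (i, b))))"
    unfolding Wop_def phi_form by simp
  also have "\<dots> = cst n m * (\<Sum>x\<in>inputs n m. (\<Sum>c\<in>opts m. Vm m b (y i) c * Pprod n m (y(i := c)) x) * alg_state n m U init x t (i, b))"
    by (simp add: sum_distrib_left sum_distrib_right mult.assoc mult.left_commute sum.swap[of _ "opts m"])
  also have "\<dots> = cst n m * (\<Sum>x\<in>inputs n m. Pprod n m y x * (omega m ^ (b * x i) * alg_state n m U init x t (i, b)))"
    by (rule arg_cong[where f="\<lambda>z. cst n m * z"], rule sum.cong[OF refl]) (simp add: W_phase[OF assms] mult.assoc mult.left_commute)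
  finally show ?thesis .
qed

lemma phi_step: assumes "y \<in> records n m"
  shows "phi_state n m U init (Suc t) (a', y) = Uop (alg_basis n m) (U (Suc t)) (Wop m (phi_state n m U init t)) (a', y)"
proof -
  have "phi_state n m U init (Suc t) (a', y) = cst n m * (\<Sum>x\<in>inputs n m. Pprod n m y x *
      (\<Sum>q\<in>alg_basis n m. U (Suc t) a' q * (omega m ^ (snd q * x (fst q)) * alg_state n m U init x t q)))"
    unfolding phi_form by (simp add: mat_vec_def phase_oracle_def case_prod_beta)
  also have "\<dots> = (\<Sum>q\<in>alg_basis n m. U (Suc t) a' q * (cst n m * (\<Sum>x\<in>inputs n m. Pprod n m y x *
      (omega m ^ (snd q * x (fst q)) * alg_state n m U init x t q))))"
    by (simp add: sum_distrib_left mult.assoc mult.left_commute sum.swap[of _ "alg_basis n m"])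
  also have "\<dots> = (\<Sum>q\<in>alg_basis n m. U (Suc t) a' q * Wop m (phi_state n m U init t) (q, y))"
  proof (rule sum.cong[OF refl])
    fix q assume q: "q \<in> alg_basis n m"
    obtain i b where qi: "q = (i, b)" by fastforce
    have "i < n" using q qi by (simp add: alg_basis_def)
    show "U (Suc t) a' q * (cst n m * (\<Sum>x\<in>inputs n m. Pprod n m y x *
      (omega m ^ (snd q * x (fst q)) * alg_state n m U init x t q))) = U (Suc t) a' q * Wop m (phi_state n m U init t) (q, y)"
      unfolding qi W_phi[OF \<open>i < n\<close> assms] by simp
  qed
  finally show ?thesis unfolding Uop_def by simp
qed

lemma iso_sum:
  fixes M :: "'p \<Rightarrow> 'q \<Rightarrow> complex" and v :: "'q \<Rightarrow> complex"
  assumes fB: "finite B" and fB': "finite B'"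
    and orth: "\<And>q q'. q \<in> B \<Longrightarrow> q' \<in> B \<Longrightarrow> (\<Sum>p\<in>B'. cnj (M p q) * M p q') = (if q = q' then 1 else 0)"
  shows "(\<Sum>p\<in>B'. (cmod (\<Sum>q\<in>B. M p q * v q))\<^sup>2) = (\<Sum>q\<in>B. (cmod (v q))\<^sup>2)"
proof -
  have "complex_of_real (\<Sum>p\<in>B'. (cmod (\<Sum>q\<in>B. M p q * v q))\<^sup>2)
      = (\<Sum>p\<in>B'. cnj (\<Sum>q\<in>B. M p q * v q) * (\<Sum>q'\<in>B. M p q' * v q'))"
    unfolding of_real_sum complex_norm_square by (simp add: mult.commute)
  also have "\<dots> = (\<Sum>p\<in>B'. \<Sum>q\<in>B. \<Sum>q'\<in>B. cnj (M p q * v q) * (M p q' * v q'))"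
    unfolding cnj_sum sum_product ..
  also have "\<dots> = (\<Sum>q\<in>B. \<Sum>q'\<in>B. \<Sum>p\<in>B'. cnj (M p q * v q) * (M p q' * v q'))"
    by (subst sum.swap, rule sum.cong[OF refl], rule sum.swap)
  also have "\<dots> = (\<Sum>q\<in>B. \<Sum>q'\<in>B. (cnj (v q) * v q') * (\<Sum>p\<in>B'. cnj (M p q) * M p q'))"
    apply (rule sum.cong[OF refl])+
    unfolding sum_distrib_left by (rule sum.cong[OF refl]) (simp add: ac_simps)
  also have "\<dots> = (\<Sum>q\<in>B. \<Sum>q'\<in>B. if q' = q then cnj (v q) * v q' else 0)"
    by (rule sum.cong[OF refl], rule sum.cong[OF refl]) (auto simp: orth)
  also have "\<dots> = (\<Sum>q\<in>B. cnj (v q) * v q)"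
    using fB by simp
  also have "\<dots> = complex_of_real (\<Sum>q\<in>B. (cmod (v q))\<^sup>2)"
    unfolding of_real_sum complex_norm_square by (simp add: mult.commute)
  finally show ?thesis by (simp only: of_real_eq_iff)
qed

lemma rec_upd: "y \<in> records n m \<Longrightarrow> i < n \<Longrightarrow> e \<in> opts m \<Longrightarrow> y(i := e) \<in> records n m"
  unfolding records_def opts_def by (auto simp: PiE_iff extensional_def)

lemma regroup: assumes "i < n"
  shows "(\<Sum>y\<in>records n m. f y) = (\<Sum>y'\<in>{y\<in>records n m. y i = None}. \<Sum>e\<in>opts m. f (y'(i := e)))"
proof -
  have "(\<Sum>y\<in>records n m. f y) = (\<Sum>p\<in>{y\<in>records n m. y i = None} \<times> opts m. f ((fst p)(i := snd p)))"
  proof (rule sum.reindex_bij_witness[where i="\<lambda>p. (fst p)(i := snd p)" and j="\<lambda>y. (y(i := None), y i)"])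
    fix y assume y: "y \<in> records n m"
    show "(fst (y(i := None), y i))(i := snd (y(i := None), y i)) = y" by simp
    show "(y(i := None), y i) \<in> {y \<in> records n m. y i = None} \<times> opts m"
      using rec_upd[OF y assms, of None] rec_opts[OF y assms] by simp
    show "f ((fst (y(i := None), y i))(i := snd (y(i := None), y i))) = f y" by simp
  next
    fix p assume p: "p \<in> {y \<in> records n m. y i = None} \<times> opts m"
    obtain y' e where pe: "p = (y', e)" by fastforce
    have y': "y' \<in> records n m" "y' i = None" "e \<in> opts m" using p pe by auto
    show "((fst p)(i := snd p, i := None), ((fst p)(i := snd p)) i) = p"
      using y' pe by auto
    show "(fst p)(i := snd p) \<in> records n m" using rec_upd[OF y'(1) assms y'(3)] pe by simp
  qed
  also have "\<dots> = (\<Sum>y'\<in>{y\<in>records n m. y i = None}. \<Sum>e\<in>opts m. f (y'(i := e)))"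
    by (subst sum.cartesian_product) (simp add: case_prod_beta)
  finally show ?thesis .
qed

definition nrm2 :: "nat \<Rightarrow> nat \<Rightarrow> jvec \<Rightarrow> real" where
  "nrm2 n m F = (\<Sum>a\<in>alg_basis n m. \<Sum>y\<in>records n m. (cmod (F (a, y)))\<^sup>2)"

definition nrm :: "nat \<Rightarrow> nat \<Rightarrow> jvec \<Rightarrow> real" where
  "nrm n m F = L2_set (\<lambda>p. cmod (F p)) (alg_basis n m \<times> records n m)"

definition Pc :: "nat \<Rightarrow> jvec \<Rightarrow> jvec" where
  "Pc n F = (\<lambda>(a, y). if collision n y then F (a, y) else 0)"

definition Qc :: "nat \<Rightarrow> jvec \<Rightarrow> jvec" where
  "Qc n F = (\<lambda>(a, y). if collision n y then 0 else F (a, y))"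

lemma finite_alg[simp]: "finite (alg_basis n m)" by (simp add: alg_basis_def)

lemma nrm_eq: "nrm n m F = sqrt (nrm2 n m F)"
  unfolding nrm_def nrm2_def L2_set_def by (simp add: sum.cartesian_product case_prod_beta)

lemma nrm2_nonneg: "0 \<le> nrm2 n m F"
  unfolding nrm2_def by (intro sum_nonneg) simp

lemma nrm_tri: "nrm n m (\<lambda>p. F p + G p) \<le> nrm n m F + nrm n m G"
proof -
  have "nrm n m (\<lambda>p. F p + G p) \<le> L2_set (\<lambda>p. cmod (F p) + cmod (G p)) (alg_basis n m \<times> records n m)"
    unfolding nrm_def by (rule L2_set_mono) (auto simp: norm_triangle_ineq)
  also have "\<dots> \<le> nrm n m F + nrm n m G" unfolding nrm_def by (rule L2_set_triangle_ineq)
  finally show ?thesis .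
qed

lemma nrm_mono: "(\<And>p. cmod (F p) \<le> cmod (G p)) \<Longrightarrow> nrm n m F \<le> nrm n m G"
  unfolding nrm_def by (rule L2_set_mono) auto

lemma nrm2_cong: "(\<And>a y. a \<in> alg_basis n m \<Longrightarrow> y \<in> records n m \<Longrightarrow> F (a, y) = G (a, y)) \<Longrightarrow> nrm2 n m F = nrm2 n m G"
  unfolding nrm2_def by (intro sum.cong refl) auto

lemma unitary_orth: "unitary_on B M \<Longrightarrow> q \<in> B \<Longrightarrow> q' \<in> B \<Longrightarrow> (\<Sum>p\<in>B. cnj (M p q) * M p q') = (if q = q' then 1 else 0)"
  unfolding unitary_on_def by blast

lemma nrm2_U: assumes "unitary_on (alg_basis n m) M"
  shows "nrm2 n m (Uop (alg_basis n m) M F) = nrm2 n m F"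
proof -
  have "nrm2 n m (Uop (alg_basis n m) M F) = (\<Sum>y\<in>records n m. \<Sum>a'\<in>alg_basis n m. (cmod (\<Sum>a\<in>alg_basis n m. M a' a * F (a, y)))\<^sup>2)"
    unfolding nrm2_def Uop_def by (subst sum.swap) simp
  also have "\<dots> = (\<Sum>y\<in>records n m. \<Sum>a\<in>alg_basis n m. (cmod (F (a, y)))\<^sup>2)"
    by (rule sum.cong[OF refl], rule iso_sum) (simp_all add: unitary_orth[OF assms])
  also have "\<dots> = nrm2 n m F" unfolding nrm2_def by (rule sum.swap)
  finally show ?thesis .
qed

lemma Pc_U: "Pc n (Uop B M F) = Uop B M (Pc n F)"
  unfolding Pc_def Uop_def by (rule ext) (auto)

lemma nrm2_W: assumes "m > 0"
  shows "nrm2 n m (Wop m F) = nrm2 n m F"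
  unfolding nrm2_def
proof (rule sum.cong[OF refl])
  fix a assume a: "a \<in> alg_basis n m"
  obtain i b where ab: "a = (i, b)" by fastforce
  have i: "i < n" using a ab by (simp add: alg_basis_def)
  have "(\<Sum>y\<in>records n m. (cmod (Wop m F (a, y)))\<^sup>2)
      = (\<Sum>y'\<in>{y\<in>records n m. y i = None}. \<Sum>e\<in>opts m. (cmod (\<Sum>c\<in>opts m. Vm m b e c * F (a, y'(i := c))))\<^sup>2)"
    unfolding regroup[OF i] Wop_def ab by simp
  also have "\<dots> = (\<Sum>y'\<in>{y\<in>records n m. y i = None}. \<Sum>c\<in>opts m. (cmod (F (a, y'(i := c))))\<^sup>2)"
    by (rule sum.cong[OF refl], rule iso_sum) (simp_all add: V_orth[OF assms])
  also have "\<dots> = (\<Sum>y\<in>records n m. (cmod (F (a, y)))\<^sup>2)"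
    unfolding regroup[OF i] ..
  finally show "(\<Sum>y\<in>records n m. (cmod (Wop m F (a, y)))\<^sup>2) = (\<Sum>y\<in>records n m. (cmod (F (a, y)))\<^sup>2)" .
qed

lemma W_add: "Wop m (\<lambda>p. F p + G p) = (\<lambda>p. Wop m F p + Wop m G p)"
  unfolding Wop_def by (rule ext) (simp add: case_prod_beta distrib_left sum.distrib)

lemma PQ: "F = (\<lambda>p. Pc n F p + Qc n F p)"
  unfolding Pc_def Qc_def by (rule ext) (simp add: case_prod_beta)

lemma Pc_add: "Pc n (\<lambda>p. F p + G p) = (\<lambda>p. Pc n F p + Pc n G p)"
  unfolding Pc_def by (rule ext) (simp add: case_prod_beta)

lemma Pc_le: "cmod (Pc n F p) \<le> cmod (F p)"
  unfolding Pc_def by (simp add: case_prod_beta)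

lemma Qc_le: "cmod (Qc n F p) \<le> cmod (F p)"
  unfolding Qc_def by (simp add: case_prod_beta)

definition nn :: "nat \<Rightarrow> (nat \<Rightarrow> nat option) \<Rightarrow> nat set" where
  "nn n y = {i. i < n \<and> y i \<noteq> None}"

lemma finite_nn[simp]: "finite (nn n y)" unfolding nn_def by simp

lemma sumS_some: assumes "j < m" shows "(\<Sum>k<m. S_loc m (Some j) (Some k)) = 0"
proof -
  have "(\<Sum>k<m. S_loc m (Some j) (Some k)) = (\<Sum>k<m. (if j = k then 1 else 0) - 1 / of_nat m)"
    by (rule sum.cong[OF refl]) (simp add: S_ss assms)
  also have "\<dots> = 0" using assms by (simp add: sum_subtractf)
  finally show ?thesis .
qed

lemma sumS_none: assumes "m > 0" shows "(\<Sum>k<m. S_loc m None (Some k)) = complex_of_real (sqrt (real m))"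
proof -
  have "(\<Sum>k<m. S_loc m None (Some k)) = of_nat m / complex_of_real (sqrt (real m))"
    using assms by (simp add: S_ns)
  also have "\<dots> = complex_of_real (sqrt (real m))"
    using sqrt_sq_c[OF assms] assms by (simp add: field_simps)
  finally show ?thesis .
qed

lemma sum_Pprod: "(\<Sum>x\<in>inputs n m. Pprod n m y x) = (\<Prod>i<n. \<Sum>k<m. S_loc m (y i) (Some k))"
  unfolding Pprod_def inputs_def by (subst prod_sum_PiE) auto

definition psi0 :: "nat \<Rightarrow> nat \<Rightarrow> (nat \<Rightarrow> amat) \<Rightarrow> nat \<times> nat \<Rightarrow> nat \<times> nat \<Rightarrow> complex" where
  "psi0 n m U init = mat_vec (alg_basis n m) (U 0) (basis_vec init)"

lemma phi0: assumes "m > 0" "y \<in> records n m"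
  shows "phi_state n m U init 0 (a, y) = (if \<forall>i<n. y i = None then psi0 n m U init a else 0)"
proof -
  have "phi_state n m U init 0 (a, y) = cst n m * (\<Prod>i<n. \<Sum>k<m. S_loc m (y i) (Some k)) * psi0 n m U init a"
    unfolding phi_form psi0_def by (simp add: sum_distrib_right[symmetric] sum_Pprod)
  also have "\<dots> = (if \<forall>i<n. y i = None then psi0 n m U init a else 0)"
  proof (cases "\<forall>i<n. y i = None")
    case True
    hence "(\<Prod>i<n. \<Sum>k<m. S_loc m (y i) (Some k)) = (\<Prod>i<n. complex_of_real (sqrt (real m)))"
      by (intro prod.cong refl) (simp add: sumS_none[OF assms(1)])
    also have "\<dots> = complex_of_real (sqrt (real m ^ n))" by (simp add: real_sqrt_power)
    finally show ?thesis using True assms(1) unfolding cst_def by simp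
  next
    case False
    then obtain i where i: "i < n" "y i \<noteq> None" by blast
    then obtain j where j: "y i = Some j" by blast
    have "j < m" using rec_opts[OF assms(2) i(1)] j by simp
    hence "(\<Sum>k<m. S_loc m (y i) (Some k)) = 0" using j sumS_some by simp
    hence "(\<Prod>i<n. \<Sum>k<m. S_loc m (y i) (Some k)) = 0" using i by (intro prod_zero) auto
    thus ?thesis unfolding if_not_P[OF False] by simp
  qed
  finally show ?thesis .
qed

lemma nn_upd: "card (nn n y) \<le> Suc (card (nn n (y(i := c))))"
proof -
  have "nn n y \<subseteq> insert i (nn n (y(i := c)))" unfolding nn_def by auto
  hence "card (nn n y) \<le> card (insert i (nn n (y(i := c))))" by (intro card_mono) auto
  also have "\<dots> \<le> Suc (card (nn n (y(i := c))))" by (rule card_insert_le_m1) auto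
  finally show ?thesis .
qed

lemma support: assumes "m > 0"
  shows "y \<in> records n m \<Longrightarrow> card (nn n y) > t \<Longrightarrow> phi_state n m U init t (a, y) = 0"
proof (induction t arbitrary: a y)
  case 0
  then obtain i where "i \<in> nn n y" by (metis card.empty equals0I less_irrefl)
  hence nN: "\<not> (\<forall>i<n. y i = None)" unfolding nn_def by auto
  show ?case unfolding phi0[OF assms 0(1)] if_not_P[OF nN] ..
next
  case (Suc t)
  have "Wop m (phi_state n m U init t) (q, y) = 0" if q: "q \<in> alg_basis n m" for q
  proof -
    obtain i b where qi: "q = (i, b)" by fastforce
    have i: "i < n" using q qi by (simp add: alg_basis_def)
    have "phi_state n m U init t (q, y(i := c)) = 0" if c: "c \<in> opts m" for c
    proof (rule Suc.IH)
      show "y(i := c) \<in> records n m" by (rule rec_upd[OF Suc.prems(1) i c])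
      show "t < card (nn n (y(i := c)))" using nn_upd[of n y i c] Suc.prems(2) by simp
    qed
    thus ?thesis unfolding Wop_def qi by simp
  qed
  thus ?case unfolding phi_step[OF Suc.prems(1)] Uop_def by simp
qed

lemma nrm2_phi0: assumes "m > 0" "unitary_on (alg_basis n m) (U 0)" "init \<in> alg_basis n m"
  shows "nrm2 n m (phi_state n m U init 0) = 1"
proof -
  define y0 where "y0 = restrict (\<lambda>_. None :: nat option) {..<n}"
  have y0R: "y0 \<in> records n m" unfolding y0_def records_def by auto
  have allN: "(\<forall>i<n. y i = None) \<longleftrightarrow> y = y0" if y: "y \<in> records n m" for y
  proof
    assume a: "\<forall>i<n. y i = None"
    show "y = y0"
    proof (rule PiE_ext[OF _ _])
      show "y \<in> Pi\<^sub>E {..<n} (\<lambda>_. insert None (Some ` {..<m}))" using y unfolding records_def .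
      show "y0 \<in> Pi\<^sub>E {..<n} (\<lambda>_. insert None (Some ` {..<m}))" using y0R unfolding records_def .
      fix i assume "i \<in> {..<n}" thus "y i = y0 i" using a unfolding y0_def by simp
    qed
  next
    assume "y = y0" thus "\<forall>i<n. y i = None" unfolding y0_def by simp
  qed
  have "nrm2 n m (phi_state n m U init 0) = (\<Sum>a\<in>alg_basis n m. \<Sum>y\<in>records n m. if y = y0 then (cmod (psi0 n m U init a))\<^sup>2 else 0)"
    unfolding nrm2_def by (intro sum.cong refl) (simp add: phi0[OF assms(1)] allN)
  also have "\<dots> = (\<Sum>a\<in>alg_basis n m. (cmod (\<Sum>q\<in>alg_basis n m. U 0 a q * basis_vec init q))\<^sup>2)"
    using y0R by (simp add: psi0_def mat_vec_def)
  also have "\<dots> = (\<Sum>q\<in>alg_basis n m. (cmod (basis_vec init q))\<^sup>2)"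
    by (rule iso_sum) (simp_all add: unitary_orth[OF assms(2)])
  also have "\<dots> = (\<Sum>q\<in>alg_basis n m. if q = init then 1 else 0)"
    by (rule sum.cong[OF refl]) (simp add: basis_vec_def)
  also have "\<dots> = 1" using assms(3) by simp
  finally show ?thesis .
qed

lemma nrm2_phi: assumes "m > 0" "\<forall>k\<le>T. unitary_on (alg_basis n m) (U k)" "init \<in> alg_basis n m"
  shows "t \<le> T \<Longrightarrow> nrm2 n m (phi_state n m U init t) = 1"
proof (induction t)
  case 0 thus ?case using nrm2_phi0[OF assms(1) _ assms(3)] assms(2) by simp
next
  case (Suc t)
  have "nrm2 n m (phi_state n m U init (Suc t)) = nrm2 n m (Uop (alg_basis n m) (U (Suc t)) (Wop m (phi_state n m U init t)))"
    by (rule nrm2_cong) (simp add: phi_step)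
  also have "\<dots> = nrm2 n m (Wop m (phi_state n m U init t))"
    by (rule nrm2_U) (use assms(2) Suc.prems in simp)
  also have "\<dots> = 1" using nrm2_W[OF assms(1)] Suc by simp
  finally show ?case .
qed

lemma cs: "(cmod (\<Sum>c\<in>C. a c * b c))\<^sup>2 \<le> (\<Sum>c\<in>C. (cmod (a c))\<^sup>2) * (\<Sum>c\<in>C. (cmod (b c))\<^sup>2)"
proof -
  have "cmod (\<Sum>c\<in>C. a c * b c) \<le> (\<Sum>c\<in>C. \<bar>cmod (a c)\<bar> * \<bar>cmod (b c)\<bar>)"
    by (rule order_trans[OF norm_sum]) (simp add: norm_mult)
  also have "\<dots> \<le> L2_set (\<lambda>c. cmod (a c)) C * L2_set (\<lambda>c. cmod (b c)) C" by (rule L2_set_mult_ineq)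
  finally have "(cmod (\<Sum>c\<in>C. a c * b c))\<^sup>2 \<le> (L2_set (\<lambda>c. cmod (a c)) C * L2_set (\<lambda>c. cmod (b c)) C)\<^sup>2"
    by (rule power_mono) simp
  also have "\<dots> = (\<Sum>c\<in>C. (cmod (a c))\<^sup>2) * (\<Sum>c\<in>C. (cmod (b c))\<^sup>2)"
    unfolding L2_set_def power_mult_distrib by (simp add: sum_nonneg)
  finally show ?thesis .
qed

lemma coll_upd1: assumes "collision n y" "y i = None" shows "collision n (y(i := c))"
proof -
  obtain j k where jk: "j < n" "k < n" "j \<noteq> k" "y j = y k" "y j \<noteq> None"
    using assms(1) unfolding collision_def by blast
  have "j \<noteq> i" "k \<noteq> i" using jk assms(2) by auto
  thus ?thesis unfolding collision_def using jk by (intro exI[of _ j] conjI exI[of _ k]) auto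
qed

lemma coll_upd2: assumes "\<not> collision n y" "collision n (y(i := e))"
  shows "\<exists>j. j < n \<and> j \<noteq> i \<and> y j = e \<and> e \<noteq> None"
proof -
  obtain j k where jk: "j < n" "k < n" "j \<noteq> k" "(y(i := e)) j = (y(i := e)) k" "(y(i := e)) j \<noteq> None"
    using assms(2) unfolding collision_def by blast
  show ?thesis
  proof (cases "j = i")
    case True
    thus ?thesis using jk by (intro exI[of _ k]) auto
  next
    case False
    show ?thesis
    proof (cases "k = i")
      case True
      thus ?thesis using jk False by (intro exI[of _ j]) auto
    next
      case False2: False
      have "collision n y" unfolding collision_def
        using jk False False2 by (intro exI[of _ j] conjI exI[of _ k]) auto
      thus ?thesis using assms(1) by blast
    qed
  qed
qed

lemma local_bound:
  fixes g :: "nat option \<Rightarrow> complex"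
  assumes m0: "m > 0" and b: "b < m" and i: "i < n" and y': "y' \<in> records n m" "y' i = None"
    and gz: "\<And>c. c \<in> opts m \<Longrightarrow> collision n (y'(i := c)) \<Longrightarrow> g c = 0"
    and gt: "\<And>c. c \<in> opts m \<Longrightarrow> g c \<noteq> 0 \<Longrightarrow> card (nn n (y'(i := c))) \<le> t"
  shows "(\<Sum>e\<in>opts m. (cmod (if collision n (y'(i := e)) then (\<Sum>c\<in>opts m. Vm m b e c * g c) else 0))\<^sup>2)
     \<le> 10 * real t / real m * (\<Sum>c\<in>opts m. (cmod (g c))\<^sup>2)"
proof -
  define S where "S = (\<Sum>c\<in>opts m. (cmod (g c))\<^sup>2)"
  have S0: "S \<ge> 0" unfolding S_def by (intro sum_nonneg) simp
  define K where "K = {e\<in>opts m. collision n (y'(i := e))}"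
  have LHS: "(\<Sum>e\<in>opts m. (cmod (if collision n (y'(i := e)) then (\<Sum>c\<in>opts m. Vm m b e c * g c) else 0))\<^sup>2)
      = (\<Sum>e\<in>K. (cmod (\<Sum>c\<in>opts m. Vm m b e c * g c))\<^sup>2)"
    unfolding K_def by (subst sum.inter_filter) (auto intro!: sum.cong)
  show ?thesis
  proof (cases "\<forall>c\<in>opts m. g c = 0")
    case True
    have "(\<Sum>e\<in>K. (cmod (\<Sum>c\<in>opts m. Vm m b e c * g c))\<^sup>2) = 0"
      using True by simp
    thus ?thesis unfolding LHS S_def[symmetric] using S0 by simp
  next
    case False
    then obtain c0 where c0: "c0 \<in> opts m" "g c0 \<noteq> 0" by blast
    have nc0: "\<not> collision n (y'(i := c0))" using gz c0 by blast
    have nc: "\<not> collision n y'"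
    proof
      assume cy: "collision n y'"
      have "collision n (y'(i := c0))" using coll_upd1[of n y' i c0] cy y'(2) by blast
      with nc0 show False by blast
    qed
    have "nn n y' \<subseteq> nn n (y'(i := c0))" unfolding nn_def using y'(2) by auto
    hence "card (nn n y') \<le> card (nn n (y'(i := c0)))" by (intro card_mono) auto
    also have "\<dots> \<le> t" using gt c0 by blast
    finally have cardnn: "card (nn n y') \<le> t" .
    have "K \<subseteq> y' ` nn n y'"
    proof
      fix e assume e: "e \<in> K"
      hence "collision n (y'(i := e))" unfolding K_def by blast
      from coll_upd2[OF nc this] obtain j where "j < n" "j \<noteq> i" "y' j = e" "e \<noteq> None" by blast
      thus "e \<in> y' ` nn n y'" unfolding nn_def by auto
    qed
    hence "card K \<le> card (y' ` nn n y')" by (intro card_mono) auto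
    also have "\<dots> \<le> card (nn n y')" by (rule card_image_le) simp
    finally have cardK: "card K \<le> t" using cardnn by simp
    have each: "(cmod (\<Sum>c\<in>opts m. Vm m b e c * g c))\<^sup>2 \<le> 10 / real m * S" if e: "e \<in> K" for e
    proof -
      have eo: "e \<in> opts m" and ec: "collision n (y'(i := e))" using e unfolding K_def by auto
      have ge: "g e = 0" using gz[OF eo ec] .
      from coll_upd2[OF nc ec] obtain v where v: "e = Some v" by blast
      have vm: "v < m" using eo v by simp
      have "(\<Sum>c\<in>opts m. Vm m b e c * g c) = Vm m b e e * g e + (\<Sum>c\<in>opts m - {e}. Vm m b e c * g c)"
        by (rule sum.remove[OF finite_opts eo])
      hence "(\<Sum>c\<in>opts m. Vm m b e c * g c) = (\<Sum>c\<in>opts m - {e}. Vm m b e c * g c)" using ge by simp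
      hence "(cmod (\<Sum>c\<in>opts m. Vm m b e c * g c))\<^sup>2
          \<le> (\<Sum>c\<in>opts m - {e}. (cmod (Vm m b e c))\<^sup>2) * (\<Sum>c\<in>opts m - {e}. (cmod (g c))\<^sup>2)"
        using cs[of "\<lambda>c. Vm m b e c" g "opts m - {e}"] by simp
      also have "\<dots> \<le> 10 / real m * S"
      proof (rule mult_mono)
        show "(\<Sum>c\<in>opts m - {e}. (cmod (Vm m b e c))\<^sup>2) \<le> 10 / real m"
          using V_row[OF b vm] v by simp
        show "(\<Sum>c\<in>opts m - {e}. (cmod (g c))\<^sup>2) \<le> S"
          unfolding S_def by (rule sum_mono2) auto
        show "0 \<le> 10 / real m" by simp
        show "0 \<le> (\<Sum>c\<in>opts m - {e}. (cmod (g c))\<^sup>2)" by (intro sum_nonneg) simp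
      qed
      finally show ?thesis .
    qed
    have "(\<Sum>e\<in>K. (cmod (\<Sum>c\<in>opts m. Vm m b e c * g c))\<^sup>2) \<le> of_nat (card K) * (10 / real m * S)"
      by (rule sum_bounded_above) (rule each)
    also have "\<dots> \<le> real t * (10 / real m * S)"
      by (rule mult_right_mono) (use cardK S0 in simp_all)
    also have "\<dots> = 10 * real t / real m * S" by simp
    finally show ?thesis unfolding LHS S_def .
  qed
qed

lemma key: assumes m0: "m > 0"
  and hG: "\<And>a y. a \<in> alg_basis n m \<Longrightarrow> y \<in> records n m \<Longrightarrow> collision n y \<or> t < card (nn n y) \<Longrightarrow> G (a, y) = 0"
  shows "nrm2 n m (Pc n (Wop m G)) \<le> 10 * real t / real m * nrm2 n m G"
  unfolding nrm2_def sum_distrib_left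
proof (rule sum_mono)
  fix a assume a: "a \<in> alg_basis n m"
  obtain i b where ab: "a = (i, b)" by fastforce
  have i: "i < n" and b: "b < m" using a ab by (auto simp: alg_basis_def)
  have "(\<Sum>y\<in>records n m. (cmod (Pc n (Wop m G) (a, y)))\<^sup>2)
      = (\<Sum>y'\<in>{y\<in>records n m. y i = None}. \<Sum>e\<in>opts m.
          (cmod (if collision n (y'(i := e)) then (\<Sum>c\<in>opts m. Vm m b e c * G (a, y'(i := c))) else 0))\<^sup>2)"
    unfolding regroup[OF i] Pc_def Wop_def ab by (simp cong: if_cong)
  also have "\<dots> \<le> (\<Sum>y'\<in>{y\<in>records n m. y i = None}. 10 * real t / real m * (\<Sum>c\<in>opts m. (cmod (G (a, y'(i := c))))\<^sup>2))"
  proof (rule sum_mono)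
    fix y' assume y': "y' \<in> {y\<in>records n m. y i = None}"
    show "(\<Sum>e\<in>opts m. (cmod (if collision n (y'(i := e)) then (\<Sum>c\<in>opts m. Vm m b e c * G (a, y'(i := c))) else 0))\<^sup>2)
        \<le> 10 * real t / real m * (\<Sum>c\<in>opts m. (cmod (G (a, y'(i := c))))\<^sup>2)"
    proof (rule local_bound[OF m0 b i])
      show "y' \<in> records n m" "y' i = None" using y' by auto
      fix c assume c: "c \<in> opts m"
      have yc: "y'(i := c) \<in> records n m" using rec_upd[OF _ i c] y' by simp
      show "collision n (y'(i := c)) \<Longrightarrow> G (a, y'(i := c)) = 0" using hG[OF a yc] by blast
      show "G (a, y'(i := c)) \<noteq> 0 \<Longrightarrow> card (nn n (y'(i := c))) \<le> t" using hG[OF a yc] by force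
    qed
  qed
  also have "\<dots> = 10 * real t / real m * (\<Sum>y\<in>records n m. (cmod (G (a, y)))\<^sup>2)"
    by (simp only: regroup[OF i] sum_distrib_left)
  finally show "(\<Sum>y\<in>records n m. (cmod (Pc n (Wop m G) (a, y)))\<^sup>2) \<le> (\<Sum>y\<in>records n m. 10 * real t / real m * (cmod (G (a, y)))\<^sup>2)"
    by (simp only: sum_distrib_left)
qed

lemma Delta_eq: "Delta n m U init t = nrm n m (Pc n (phi_state n m U init t))"
  unfolding Delta_def nrm_def L2_set_def Pc_def
  by (rule arg_cong[where f=sqrt], rule sum.cong[OF refl]) auto

lemma nrm2_mono: "(\<And>p. cmod (F p) \<le> cmod (G p)) \<Longrightarrow> nrm2 n m F \<le> nrm2 n m G"
  unfolding nrm2_def by (intro sum_mono power_mono) auto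

theorem proposition4p11:
  fixes n m T t :: nat and U :: "nat \<Rightarrow> amat" and init :: "nat \<times> nat"
  assumes "m \<ge> 2"
    and "\<forall>k\<le>T. unitary_on (alg_basis n m) (U k)"
    and "init \<in> alg_basis n m"
    and "t + 1 \<le> T"
  shows "Delta n m U init (t + 1) \<le> Delta n m U init t + sqrt (10 * real t / real m)"
proof -
  have m0: "m > 0" using assms(1) by simp
  define Phi where "Phi = phi_state n m U init t"
  define W where "W = Wop m Phi"
  have "nrm2 n m (Pc n (phi_state n m U init (t + 1))) = nrm2 n m (Pc n (Uop (alg_basis n m) (U (Suc t)) W))"
    by (rule nrm2_cong) (simp add: Pc_def phi_step W_def Phi_def)
  also have "\<dots> = nrm2 n m (Pc n W)"
    unfolding Pc_U by (rule nrm2_U) (use assms(2,4) in simp)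
  finally have D1: "Delta n m U init (t + 1) = nrm n m (Pc n W)"
    unfolding Delta_eq nrm_eq by simp
  have "Pc n W = (\<lambda>p. Pc n (Wop m (Pc n Phi)) p + Pc n (Wop m (Qc n Phi)) p)"
    unfolding W_def by (subst PQ[of Phi n]) (simp only: W_add Pc_add)
  hence "nrm n m (Pc n W) \<le> nrm n m (Pc n (Wop m (Pc n Phi))) + nrm n m (Pc n (Wop m (Qc n Phi)))"
    using nrm_tri by metis
  also have "nrm n m (Pc n (Wop m (Pc n Phi))) \<le> Delta n m U init t"
  proof -
    have "nrm n m (Pc n (Wop m (Pc n Phi))) \<le> nrm n m (Wop m (Pc n Phi))" by (rule nrm_mono) (rule Pc_le)
    also have "\<dots> = nrm n m (Pc n Phi)" unfolding nrm_eq nrm2_W[OF m0] ..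
    finally show ?thesis unfolding Delta_eq Phi_def .
  qed
  also have "nrm n m (Pc n (Wop m (Qc n Phi))) \<le> sqrt (10 * real t / real m)"
  proof -
    have "nrm2 n m (Pc n (Wop m (Qc n Phi))) \<le> 10 * real t / real m * nrm2 n m (Qc n Phi)"
    proof (rule key[OF m0])
      fix a y assume y: "y \<in> records n m" and h: "collision n y \<or> t < card (nn n y)"
      show "Qc n Phi (a, y) = 0"
      proof (cases "collision n y")
        case True thus ?thesis unfolding Qc_def by simp
      next
        case False
        hence "t < card (nn n y)" using h by blast
        hence "Phi (a, y) = 0" unfolding Phi_def by (rule support[OF m0 y])
        thus ?thesis unfolding Qc_def by simp
      qed
    qed
    also have "\<dots> \<le> 10 * real t / real m * 1"
    proof (rule mult_left_mono)
      have "nrm2 n m (Qc n Phi) \<le> nrm2 n m Phi" by (rule nrm2_mono) (rule Qc_le)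
      also have "\<dots> = 1" unfolding Phi_def by (rule nrm2_phi[OF m0 assms(2,3)]) (use assms(4) in simp)
      finally show "nrm2 n m (Qc n Phi) \<le> 1" .
    qed simp
    finally show ?thesis unfolding nrm_eq by (simp add: real_sqrt_le_mono)
  qed
  finally show ?thesis unfolding D1 by simp
qed

end
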